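(* Let $q$ be a prime power, let $\mathbf{C}\subseteq\mathbf{F}_q^n$ be a projective linear $[n,k]_q$ code with maximum weight $w$, and let $h$ be a positive integer with $h>\log_q w-k+2$. Let $\mathbf{C}_1$ be the simplex complementary code of $\mathbf{C}$ of dimension $k+h$, which is a $[\frac{q^{k+h}-1}{q-1}-n,\ k+h,\ q^{k+h-1}-w]_q$ code with maximum weight $q^{k+h-1}$, and set $n'=\lceil\frac{q(q^{k+h-1}-w)}{q-1}\rceil-q^{k+h-1}$. Then the code $\mathbf{C}'$ obtained from $\mathbf{C}_1$ by the extension construction is a minimal linear code with parameters $[\frac{q^{k+h}-1}{q-1}-n+n',\ k+h,\ q^{k+h-1}-w]_q$ and maximum weight $q^{k+h-1}+n'$, and it violates the Ashikhmin–Barg condition.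
   Context: Projective code: the columns of a generator matrix are nonzero and pairwise linearly independent. Simplex complementary code of dimension $K=k+h$: append $h$ zeros to the columns $\mathbf{g}_1,\dots,\mathbf{g}_n$ of a generator matrix of $\mathbf{C}$, choose a set $P$ of representatives of all one-dimensional subspaces of $\mathbf{F}_q^K$ containing these vectors, and take the code generated by the matrix whose columns are $P\setminus\{\mathbf{g}_1,\dots,\mathbf{g}_n\}$. Extension construction: for a linear $[N,K]_q$ code $\mathbf{D}$ with $K\ge 2$, minimum weight $w_{min}$, maximum weight $w_{max}$ and $n'=\lceil\frac{qw_{min}}{q-1}\rceil-w_{max}\ge 1$, choose a basis $\mathbf{r}_1,\dots,\mathbf{r}_K$ of $\mathbf{D}$ with $wt(\mathbf{r}_1)=w_{max}$, $wt(\mathbf{r}_2)=w_{min}$, and $\mathbf{a}\in(\mathbf{F}_q^* )^{n'}$; the extended code is generated by $(\mathbf{a},\mathbf{r}_1),(\mathbf{0},\mathbf{r}_2),\dots,(\mathbf{0},\mathbf{r}_K)$ in $\mathbf{F}_q^{n'+N}$. A code is minimal if any two nonzero codewords with nested supports are scalar multiples of each other. Ashikhmin–Barg condition: $w_{min}/w_{max}>(q-1)/q$. *)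

theory Defs
  imports Complex_Main "HOL-Library.Function_Algebras"
begin

text \<open>Vectors of F_q^N are modelled as functions nat => 'a vanishing outside {..<N}.\<close>

definition scl :: "'a::field \<Rightarrow> (nat \<Rightarrow> 'a) \<Rightarrow> nat \<Rightarrow> 'a" where
  "scl c v = (\<lambda>i. c * v i)"

interpretation fv: vector_space "scl :: 'a::field \<Rightarrow> (nat \<Rightarrow> 'a) \<Rightarrow> nat \<Rightarrow> 'a"
  by unfold_locales (auto simp: scl_def algebra_simps fun_eq_iff)

definition Fn :: "nat \<Rightarrow> (nat \<Rightarrow> 'a::zero) set" where
  "Fn N = {v. \<forall>i\<ge>N. v i = 0}"

definition wt :: "(nat \<Rightarrow> 'a::zero) \<Rightarrow> nat" where
  "wt v = card {i. v i \<noteq> 0}"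

definition minwt :: "(nat \<Rightarrow> 'a::zero) set \<Rightarrow> nat" where
  "minwt C = Min (wt ` (C - {0}))"

definition maxwt :: "(nat \<Rightarrow> 'a::zero) set \<Rightarrow> nat" where
  "maxwt C = Max (wt ` (C - {0}))"

definition gen_code :: "nat \<Rightarrow> (nat \<Rightarrow> nat \<Rightarrow> 'a::field) \<Rightarrow> nat \<Rightarrow> (nat \<Rightarrow> 'a) set" where
  "gen_code m col K = {(\<lambda>j. if j < m then (\<Sum>i<K. x i * col j i) else 0) | x. x \<in> Fn K}"

text \<open>col 0..col (m-1) are the columns of a generator matrix (of full row rank k) of an [m,k] code.\<close>
definition is_gen_matrix :: "nat \<Rightarrow> (nat \<Rightarrow> nat \<Rightarrow> 'a::field) \<Rightarrow> nat \<Rightarrow> bool" where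
  "is_gen_matrix m col k \<longleftrightarrow> (\<forall>j<m. col j \<in> Fn k) \<and> fv.span (col ` {..<m}) = Fn k"

definition projective :: "nat \<Rightarrow> (nat \<Rightarrow> nat \<Rightarrow> 'a::field) \<Rightarrow> bool" where
  "projective m col \<longleftrightarrow> (\<forall>j<m. col j \<noteq> 0) \<and>
     (\<forall>i<m. \<forall>j<m. i \<noteq> j \<longrightarrow> fv.independent {col i, col j} \<and> col i \<noteq> col j)"

definition proj_reps :: "nat \<Rightarrow> (nat \<Rightarrow> 'a::field) set \<Rightarrow> bool" where
  "proj_reps K P \<longleftrightarrow> P \<subseteq> Fn K - {0} \<and> (\<forall>v \<in> Fn K - {0}. \<exists>!p \<in> P. \<exists>c. v = scl c p)"

text \<open>ps 0 .. ps (N-1) enumerate the columns P minus {g_1..g_n} of a generator matrix of the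
  simplex complementary code of dimension K (g_j already vanish beyond k, i.e. have h zeros appended).\<close>
definition simplex_compl_cols :: "nat \<Rightarrow> (nat \<Rightarrow> nat \<Rightarrow> 'a::field) \<Rightarrow> nat \<Rightarrow> nat \<Rightarrow> (nat \<Rightarrow> nat \<Rightarrow> 'a) \<Rightarrow> bool" where
  "simplex_compl_cols n g K N ps \<longleftrightarrow>
     (\<exists>P. proj_reps K P \<and> g ` {..<n} \<subseteq> P \<and> bij_betw ps {..<N} (P - g ` {..<n}))"

definition cat :: "nat \<Rightarrow> (nat \<Rightarrow> 'a) \<Rightarrow> (nat \<Rightarrow> 'a) \<Rightarrow> nat \<Rightarrow> 'a" where
  "cat m a r = (\<lambda>j. if j < m then a j else r (j - m))"

definition row_code :: "nat \<Rightarrow> (nat \<Rightarrow> nat \<Rightarrow> 'a::field) \<Rightarrow> (nat \<Rightarrow> 'a) set" where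
  "row_code K rows = {(\<lambda>j. \<Sum>i<K. x i * rows i j) | x. True}"

text \<open>r 0 = r_1, ..., r (K-1) = r_K is a basis of D with wt r_1 = w_max, wt r_2 = w_min.\<close>
definition ext_basis :: "(nat \<Rightarrow> 'a::field) set \<Rightarrow> nat \<Rightarrow> (nat \<Rightarrow> nat \<Rightarrow> 'a) \<Rightarrow> bool" where
  "ext_basis D K r \<longleftrightarrow> inj_on r {..<K} \<and> fv.independent (r ` {..<K}) \<and>
     fv.span (r ` {..<K}) = D \<and> wt (r 0) = maxwt D \<and> wt (r 1) = minwt D"

definition extension_code :: "nat \<Rightarrow> (nat \<Rightarrow> 'a::field) \<Rightarrow> (nat \<Rightarrow> nat \<Rightarrow> 'a) \<Rightarrow> nat \<Rightarrow> (nat \<Rightarrow> 'a) set" where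
  "extension_code n' a r K =
     row_code K (\<lambda>i. if i = 0 then cat n' a (r 0) else cat n' 0 (r i))"

definition minimal_code :: "(nat \<Rightarrow> 'a::field) set \<Rightarrow> bool" where
  "minimal_code C \<longleftrightarrow> (\<forall>c\<in>C - {0}. \<forall>c'\<in>C - {0}.
      {i. c' i \<noteq> 0} \<subseteq> {i. c i \<noteq> 0} \<longrightarrow> (\<exists>t. c' = scl t c))"

end

theory Submission
  imports Defs "HOL-Library.FuncSet"
begin


lemma Fn_image: "Fn K = (\<lambda>f i. if i < K then f i else 0) ` ({..<K} \<rightarrow>\<^sub>E (UNIV :: 'a::zero set))"
proof safe
  fix v :: "nat \<Rightarrow> 'a" assume "v \<in> Fn K"
  then show "v \<in> (\<lambda>f i. if i < K then f i else 0) ` ({..<K} \<rightarrow>\<^sub>E UNIV)"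
    by (intro image_eqI[where x="restrict v {..<K}"]) (auto simp: Fn_def fun_eq_iff)
qed (auto simp: Fn_def)

lemma card_Fn: "finite (Fn K :: (nat \<Rightarrow> 'a::{zero,finite}) set) \<and> card (Fn K :: (nat \<Rightarrow> 'a) set) = card (UNIV :: 'a set) ^ K"
proof -
  have inj: "inj_on (\<lambda>f i. if i < K then f i else (0::'a)) ({..<K} \<rightarrow>\<^sub>E UNIV)"
    by (auto simp: inj_on_def fun_eq_iff PiE_def extensional_def) (metis lessThan_iff)
  show ?thesis unfolding Fn_image
    by (simp add: card_image[OF inj] card_PiE finite_PiE)
qed

definition ip :: "nat \<Rightarrow> (nat \<Rightarrow> 'a::field) \<Rightarrow> (nat \<Rightarrow> 'a) \<Rightarrow> 'a" where
  "ip K x v = (\<Sum>i<K. x i * v i)"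

lemma hyperplane_card:
  fixes x :: "nat \<Rightarrow> 'a::{field,finite}"
  assumes i0: "i0 < K" and xi0: "x i0 \<noteq> 0"
  shows "card {v \<in> Fn K. ip K x v = 0} * card (UNIV :: 'a set) = card (UNIV :: 'a set) ^ K"
proof -
  define F where "F b = {v \<in> Fn K. ip K x v = b}" for b
  have fin: "finite (F b)" for b using card_Fn[where 'a='a and K=K] by (simp add: F_def)
  have shift: "ip K x (v(i0 := v i0 + c)) = ip K x v + x i0 * c" for v c
  proof -
    have "ip K x (v(i0 := v i0 + c)) = (\<Sum>i<K. x i * v i + (if i = i0 then x i0 * c else 0))"
      unfolding ip_def by (intro sum.cong) (auto simp: algebra_simps)
    also have "\<dots> = ip K x v + x i0 * c" using i0 by (simp add: sum.distrib ip_def)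
    finally show ?thesis .
  qed
  have eq: "card (F b) = card (F 0)" for b
  proof -
    have "bij_betw (\<lambda>v. v(i0 := v i0 + b / x i0)) (F 0) (F b)"
    proof (rule bij_betw_byWitness[where f'="\<lambda>v. v(i0 := v i0 - b / x i0)"])
      show "\<forall>a\<in>F 0. a(i0 := a i0 + b / x i0, i0 := (a(i0 := a i0 + b / x i0)) i0 - b / x i0) = a" by auto
      show "\<forall>a\<in>F b. a(i0 := a i0 - b / x i0, i0 := (a(i0 := a i0 - b / x i0)) i0 + b / x i0) = a" by auto
      show "(\<lambda>v. v(i0 := v i0 + b / x i0)) ` F 0 \<subseteq> F b"
        using i0 xi0 by (auto simp: F_def Fn_def shift)
      have "ip K x (v(i0 := v i0 - b / x i0)) = ip K x v - b" for v
        using shift[of v "- b / x i0"] xi0 by simp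
      then show "(\<lambda>v. v(i0 := v i0 - b / x i0)) ` F b \<subseteq> F 0"
        using i0 by (auto simp: F_def Fn_def)
    qed
    then show ?thesis by (simp add: bij_betw_same_card)
  qed
  have "Fn K = (\<Union>b. F b)" by (auto simp: F_def)
  have "card (Fn K :: (nat \<Rightarrow> 'a) set) = (\<Sum>b\<in>UNIV. card (F b))"
  proof -
    have "card (\<Union>b. F b) = (\<Sum>b\<in>UNIV. card (F b))"
    proof (rule card_UN_disjoint)
      show "finite (UNIV :: 'a set)" by simp
      show "\<forall>i\<in>UNIV. finite (F i)" using fin by blast
      show "\<forall>i\<in>UNIV. \<forall>j\<in>UNIV. i \<noteq> j \<longrightarrow> F i \<inter> F j = {}" unfolding F_def by blast
    qed
    then show ?thesis using \<open>Fn K = (\<Union>b. F b)\<close> by metis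
  qed
  also have "\<dots> = card (F 0) * card (UNIV :: 'a set)"
  proof -
    have "(\<Sum>b\<in>UNIV. card (F b)) = (\<Sum>b\<in>(UNIV::'a set). card (F 0))"
      by (rule sum.cong[OF refl]) (rule eq)
    then show ?thesis by simp
  qed
  finally show ?thesis using card_Fn[where 'a='a and K=K] by (simp add: F_def)
qed


lemma scl_nz: "c \<noteq> 0 \<Longrightarrow> p \<noteq> 0 \<Longrightarrow> scl c (p :: nat \<Rightarrow> 'a::field) \<noteq> 0"
  by (auto simp: scl_def fun_eq_iff)

lemma reps_card:
  fixes P :: "(nat \<Rightarrow> 'a::{field,finite}) set"
  assumes PR: "proj_reps K P" and Qinv: "\<And>c v. c \<noteq> 0 \<Longrightarrow> Q (scl c v) = Q v"
  shows "card {v \<in> Fn K - {0}. Q v} = card {p \<in> P. Q p} * (card (UNIV :: 'a set) - 1)"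
proof -
  have sub: "P \<subseteq> Fn K - {0}" and uq: "\<And>v. v \<in> Fn K - {0} \<Longrightarrow> \<exists>!p \<in> P. \<exists>c. v = scl c p"
    using PR unfolding proj_reps_def by auto
  define phi where "phi = (\<lambda>(p, c). scl (c::'a) (p :: nat \<Rightarrow> 'a))"
  have inFn: "scl c p \<in> Fn K - {0}" if "p \<in> P" "c \<noteq> 0" for p c
    using sub that by (auto simp: Fn_def scl_def fun_eq_iff)
  have "bij_betw phi ({p \<in> P. Q p} \<times> (UNIV - {0})) {v \<in> Fn K - {0}. Q v}"
    unfolding bij_betw_def
  proof
    show "inj_on phi ({p \<in> P. Q p} \<times> (UNIV - {0}))"
    proof (rule inj_onI)
      fix x y assume x: "x \<in> {p \<in> P. Q p} \<times> (UNIV - {0})" and y: "y \<in> {p \<in> P. Q p} \<times> (UNIV - {0})"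
        and e0: "phi x = phi y"
      obtain p c where xp: "x = (p, c)" by (cases x)
      obtain p' c' where yp: "y = (p', c')" by (cases y)
      have p: "p \<in> P" "Q p" and c: "c \<noteq> 0" using x xp by auto
      have p': "p' \<in> P" "Q p'" and c': "c' \<noteq> 0" using y yp by auto
      have e: "phi (p, c) = phi (p', c')" using e0 xp yp by simp
      then have e': "scl c p = scl c' p'" by (simp add: phi_def)
      have "p = p'" using uq[OF inFn[OF p(1) c]] p p' e' by blast
      have "p \<noteq> 0" using sub p by auto
      then obtain i where i: "p i \<noteq> 0" by (auto simp: fun_eq_iff)
      have "c * p i = c' * p' i" using e' by (simp add: scl_def fun_eq_iff)
      then have "c = c'" using i \<open>p = p'\<close> by simp
      then show "x = y" using xp yp \<open>p = p'\<close> by simp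
    qed
    show "phi ` ({p \<in> P. Q p} \<times> (UNIV - {0})) = {v \<in> Fn K - {0}. Q v}"
    proof
      show "phi ` ({p \<in> P. Q p} \<times> (UNIV - {0})) \<subseteq> {v \<in> Fn K - {0}. Q v}"
      proof
        fix v assume "v \<in> phi ` ({p \<in> P. Q p} \<times> (UNIV - {0}))"
        then obtain p c where "p \<in> P" "Q p" "c \<noteq> (0::'a)" "v = scl c p" by (auto simp: phi_def)
        then show "v \<in> {v \<in> Fn K - {0}. Q v}" using inFn Qinv by auto
      qed
      show "{v \<in> Fn K - {0}. Q v} \<subseteq> phi ` ({p \<in> P. Q p} \<times> (UNIV - {0}))"
      proof
        fix v assume "v \<in> {v \<in> Fn K - {0}. Q v}"
        then have v: "v \<in> Fn K - {0}" "Q v" by auto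
        then obtain p c where p: "p \<in> P" and vc: "v = scl c p" using uq by blast
        have "c \<noteq> 0" using vc v by (auto simp: scl_def fun_eq_iff)
        then have "(p, c) \<in> {p \<in> P. Q p} \<times> (UNIV - {0})" using p vc v Qinv by auto
        moreover have "v = phi (p, c)" using vc by (simp add: phi_def)
        ultimately show "v \<in> phi ` ({p \<in> P. Q p} \<times> (UNIV - {0}))" by blast
      qed
    qed
  qed
  then have "card {v \<in> Fn K - {0}. Q v} = card ({p \<in> P. Q p} \<times> (UNIV - {0::'a}))"
    by (simp add: bij_betw_same_card)
  also have "\<dots> = card {p \<in> P. Q p} * (card (UNIV :: 'a set) - 1)"
    by (simp add: card_cartesian_product card_Diff_singleton)
  finally show ?thesis .
qed


lemma card_ge2: "card (UNIV :: 'a::{field,finite} set) \<ge> 2"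
proof -
  have "{0, 1::'a} \<subseteq> UNIV" by simp
  then have "card {0, 1::'a} \<le> card (UNIV :: 'a set)" by (intro card_mono) auto
  then show ?thesis by simp
qed

lemma ip_scl: "ip K x (scl c v) = c * ip K x v"
  by (simp add: ip_def scl_def sum_distrib_left algebra_simps)

lemma card_P:
  fixes P :: "(nat \<Rightarrow> 'a::{field,finite}) set"
  assumes PR: "proj_reps K P"
  shows "card P * (card (UNIV :: 'a set) - 1) = card (UNIV :: 'a set) ^ K - 1"
proof -
  have "card {v \<in> (Fn K :: (nat \<Rightarrow> 'a) set) - {0}. True} = card {p \<in> P. True} * (card (UNIV :: 'a set) - 1)"
    using reps_card[OF PR, where Q="\<lambda>_. True"] by simp
  moreover have "card (Fn K - {0::nat\<Rightarrow>'a}) = card (UNIV :: 'a set) ^ K - 1"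
    using card_Fn[where 'a='a and K=K] by (simp add: card_Diff_singleton Fn_def)
  moreover have "{v \<in> (Fn K :: (nat \<Rightarrow> 'a) set) - {0}. True} = Fn K - {0}" by blast
  ultimately show ?thesis by simp
qed

lemma card_P_nz:
  fixes P :: "(nat \<Rightarrow> 'a::{field,finite}) set"
  assumes PR: "proj_reps K P" and x: "x \<in> Fn K" "x \<noteq> 0"
  shows "card {p \<in> P. ip K x p \<noteq> 0} = card (UNIV :: 'a set) ^ (K - 1)"
proof -
  let ?q = "card (UNIV :: 'a set)"
  obtain i0 where xi0: "x i0 \<noteq> 0" using x by (auto simp: fun_eq_iff)
  then have i0: "i0 < K" using x by (auto simp: Fn_def)
  have h: "card {v \<in> Fn K. ip K x v = 0} * ?q = ?q ^ K" using hyperplane_card[of i0 K x] i0 xi0 by blast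
  have q2: "?q \<ge> 2" by (rule card_ge2)
  have K1: "?q ^ K = ?q ^ (K - 1) * ?q" using i0 by (metis Suc_pred' gr_implies_not0 not_gr_zero power_Suc2)
  have hc: "card {v \<in> Fn K. ip K x v = 0} = ?q ^ (K - 1)" using h K1 q2 by simp
  have fin: "finite (Fn K :: (nat \<Rightarrow> 'a) set)" using card_Fn by blast
  have "card {v \<in> Fn K. ip K x v \<noteq> 0} = card (Fn K - {v \<in> Fn K. ip K x v = 0})"
    by (rule arg_cong[where f=card]) auto
  also have "\<dots> = ?q ^ K - ?q ^ (K - 1)" using fin card_Fn[where 'a='a and K=K] hc
    by (subst card_Diff_subset) auto
  finally have c1: "card {v \<in> Fn K. ip K x v \<noteq> 0} = ?q ^ K - ?q ^ (K - 1)" .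
  have "{v \<in> Fn K - {0}. ip K x v \<noteq> 0} = {v \<in> Fn K. ip K x v \<noteq> 0}" by (auto simp: ip_def)
  moreover have "card {v \<in> Fn K - {0}. ip K x v \<noteq> 0} = card {p \<in> P. ip K x p \<noteq> 0} * (?q - 1)"
    using reps_card[OF PR, where Q="\<lambda>v. ip K x v \<noteq> 0"] by (simp add: ip_scl)
  ultimately have "card {p \<in> P. ip K x p \<noteq> 0} * (?q - 1) = ?q ^ (K - 1) * (?q - 1)"
    using c1 K1 by (simp add: algebra_simps diff_mult_distrib2)
  then show ?thesis using q2 by simp
qed


lemma card_filter_sum: "finite S \<Longrightarrow> card {i \<in> S. P i} = (\<Sum>i\<in>S. if P i then 1 else 0)"
  by (simp add: sum.If_cases Int_def)

lemma AB_minimal: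
  fixes D :: "(nat \<Rightarrow> 'a::{field,finite}) set"
  assumes sub: "fv.subspace D" and fin: "\<And>c. c \<in> D \<Longrightarrow> finite {i. c i \<noteq> 0}"
    and bnd: "\<And>c. c \<in> D - {0} \<Longrightarrow> wmin \<le> wt c \<and> wt c \<le> wmax"
    and ab: "(card (UNIV :: 'a set) - 1) * wmax < card (UNIV :: 'a set) * wmin"
  shows "minimal_code D"
  unfolding minimal_code_def
proof (intro ballI impI)
  let ?q = "card (UNIV :: 'a set)"
  let ?U = "UNIV - {0::'a}"
  fix c c' assume c: "c \<in> D - {0}" and c': "c' \<in> D - {0}"
    and ss: "{i. c' i \<noteq> 0} \<subseteq> {i. c i \<noteq> 0}"
  show "\<exists>t. c' = scl t c"
  proof (rule ccontr)
    assume nt: "\<not> (\<exists>t. c' = scl t c)"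
    define S where "S = {i. c i \<noteq> 0}"
    define S' where "S' = {i. c' i \<noteq> 0}"
    have finS: "finite S" using fin c by (auto simp: S_def)
    have q2: "?q \<ge> 2" by (rule card_ge2)
    define e where "e l = c - scl l c'" for l
    have eD: "e l \<in> D" for l using sub c c' by (simp add: e_def fv.subspace_diff fv.subspace_scale)
    have enz: "e l \<noteq> 0" if "l \<noteq> 0" for l
    proof
      assume "e l = 0"
      then have "c = scl l c'" by (simp add: e_def)
      then have "c' = scl (1 / l) c" using that by (auto simp: scl_def fun_eq_iff)
      then show False using nt by blast
    qed
    have wte: "wt (e l) = (\<Sum>i\<in>S. if c i - l * c' i \<noteq> 0 then 1 else 0)" for l
    proof -
      have "{i. e l i \<noteq> 0} = {i \<in> S. c i - l * c' i \<noteq> 0}"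
        using ss by (auto simp: e_def scl_def S_def)
      then show ?thesis unfolding wt_def using card_filter_sum[OF finS] by simp
    qed
    have lo: "wmin \<le> wt (e l)" if "l \<in> ?U" for l using bnd[of "e l"] eD enz that by auto
    have "(\<Sum>l\<in>?U. wmin) \<le> (\<Sum>l\<in>?U. wt (e l))" by (rule sum_mono) (rule lo)
    then have A: "(?q - 1) * wmin \<le> (\<Sum>l\<in>?U. wt (e l))" by (simp add: card_Diff_singleton)
    have "(\<Sum>l\<in>?U. wt (e l)) = (\<Sum>i\<in>S. \<Sum>l\<in>?U. if c i - l * c' i \<noteq> 0 then 1 else 0)"
      unfolding wte by (rule sum.swap)
    also have "\<dots> = (\<Sum>i\<in>S. card {l \<in> ?U. c i - l * c' i \<noteq> 0})"
      by (intro sum.cong refl) (rule card_filter_sum[symmetric], simp)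
    finally have B: "(\<Sum>l\<in>?U. wt (e l)) = (\<Sum>i\<in>S. card {l \<in> ?U. c i - l * c' i \<noteq> 0})" .
    have pt: "card {l \<in> ?U. c i - l * c' i \<noteq> 0} + (if c' i \<noteq> 0 then 1 else 0) = ?q - 1" if "i \<in> S" for i
    proof (cases "c' i = 0")
      case True
      then have "{l \<in> ?U. c i - l * c' i \<noteq> 0} = ?U" using that by (auto simp: S_def)
      then show ?thesis using True by (simp add: card_Diff_singleton)
    next
      case False
      have "{l \<in> ?U. c i - l * c' i \<noteq> 0} = ?U - {c i / c' i}"
        using False by (auto simp: field_simps)
      moreover have "c i / c' i \<in> ?U" using False that by (auto simp: S_def)
      ultimately have "card {l \<in> ?U. c i - l * c' i \<noteq> 0} = ?q - 2"
        by (simp add: card_Diff_singleton)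
      then show ?thesis using False q2 by simp
    qed
    have "(\<Sum>i\<in>S. card {l \<in> ?U. c i - l * c' i \<noteq> 0}) + (\<Sum>i\<in>S. if c' i \<noteq> 0 then 1 else 0) = (\<Sum>i\<in>S. ?q - 1)"
      by (simp only: sum.distrib[symmetric]) (rule sum.cong[OF refl pt])
    moreover have "(\<Sum>i\<in>S. if c' i \<noteq> 0 then 1 else 0) = card S'"
    proof -
      have "S' = {i \<in> S. c' i \<noteq> 0}" using ss by (auto simp: S_def S'_def)
      then show ?thesis using card_filter_sum[OF finS, of "\<lambda>i. c' i \<noteq> 0"] by simp
    qed
    ultimately have C: "(\<Sum>l\<in>?U. wt (e l)) + card S' = (?q - 1) * card S" using B by simp
    have "card S \<le> wmax" using bnd[OF c] by (simp add: wt_def S_def)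
    moreover have "wmin \<le> card S'" using bnd[OF c'] by (simp add: wt_def S'_def)
    ultimately have "(?q - 1) * wmin + wmin \<le> (?q - 1) * wmax" using A C
      mult_le_mono2[of "card S" wmax "?q - 1"] by linarith
    moreover have "(?q - 1) * wmin + wmin = ?q * wmin"
    proof -
      obtain m where "?q = Suc m" using q2 by (cases ?q) auto
      then show ?thesis by simp
    qed
    ultimately show False using ab by linarith
  qed
qed



lemma sum_fun_apply: "(\<Sum>i\<in>I. (f i :: nat \<Rightarrow> 'b::comm_monoid_add)) j = (\<Sum>i\<in>I. f i j)"
  by (induction I rule: infinite_finite_induct) auto

lemma sum_scl: "(\<Sum>i\<in>I. scl (x i) (f i)) = (\<lambda>j. \<Sum>i\<in>I. x i * f i j)"
  by (rule ext) (simp add: sum_fun_apply scl_def)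

lemma row_code_span:
  fixes R :: "nat \<Rightarrow> nat \<Rightarrow> 'a::field"
  assumes inj: "inj_on R {..<K}"
  shows "row_code K R = fv.span (R ` {..<K})"
proof -
  have "fv.span (R ` {..<K}) = range (\<lambda>u. \<Sum>v\<in>R ` {..<K}. scl (u v) v)"
    by (rule fv.span_finite) simp
  also have "\<dots> = range (\<lambda>u. \<Sum>i<K. scl (u (R i)) (R i))"
    by (simp add: sum.reindex[OF inj])
  also have "\<dots> = range (\<lambda>x. \<Sum>i<K. scl (x i) (R i))"
  proof safe
    fix u show "(\<Sum>i<K. scl (u (R i)) (R i)) \<in> range (\<lambda>x. \<Sum>i<K. scl (x i) (R i))"
      by (rule image_eqI[where x="\<lambda>i. u (R i)"]) auto
  next
    fix x
    have "(\<Sum>i<K. scl (x i) (R i)) = (\<Sum>i<K. scl ((\<lambda>v. x (the_inv_into {..<K} R v)) (R i)) (R i))"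
      by (intro sum.cong refl) (simp add: the_inv_into_f_f[OF inj])
    then show "(\<Sum>i<K. scl (x i) (R i)) \<in> range (\<lambda>u. \<Sum>i<K. scl (u (R i)) (R i))"
      by (intro image_eqI[where x="\<lambda>v. x (the_inv_into {..<K} R v)"]) auto
  qed
  finally show ?thesis unfolding row_code_def sum_scl by auto
qed

lemma indep_coeffs:
  fixes R :: "nat \<Rightarrow> nat \<Rightarrow> 'a::field"
  assumes inj: "inj_on R {..<K}" and ind: "fv.independent (R ` {..<K})"
    and z: "(\<lambda>j. \<Sum>i<K. x i * R i j) = 0" and i: "i < K"
  shows "x i = 0"
proof -
  have "(\<Sum>v\<in>R ` {..<K}. scl ((\<lambda>v. x (the_inv_into {..<K} R v)) v) v) = (\<Sum>i<K. scl (x i) (R i))"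
    by (simp add: sum.reindex[OF inj] the_inv_into_f_f[OF inj])
  also have "\<dots> = 0" using z by (simp add: sum_scl)
  finally have "\<forall>v\<in>R ` {..<K}. x (the_inv_into {..<K} R v) = 0"
    using fv.independentD[OF ind, of "R ` {..<K}" "\<lambda>v. x (the_inv_into {..<K} R v)"] by blast
  then show ?thesis using i by (auto simp: the_inv_into_f_f[OF inj])
qed



lemma indep_from_coeffs:
  fixes R :: "nat \<Rightarrow> nat \<Rightarrow> 'a::field"
  assumes inj: "inj_on R {..<K}"
    and z: "\<And>x. (\<lambda>j. \<Sum>i<K. x i * R i j) = 0 \<Longrightarrow> \<forall>i<K. x i = 0"
  shows "fv.independent (R ` {..<K})"
  unfolding fv.independent_explicit_module
proof (intro allI impI)
  fix t u v assume t: "finite t" "t \<subseteq> R ` {..<K}" and s0: "(\<Sum>v\<in>t. scl (u v) v) = 0" and v: "v \<in> t"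
  define x where "x i = (if R i \<in> t then u (R i) else 0)" for i
  have "(\<Sum>v\<in>t. scl (u v) v) = (\<Sum>v\<in>R ` {..<K}. scl (if v \<in> t then u v else 0) v)"
    using t by (intro sum.mono_neutral_cong_left) (auto simp: scl_def fun_eq_iff)
  also have "\<dots> = (\<Sum>i<K. scl (x i) (R i))" by (simp add: sum.reindex[OF inj] x_def)
  also have "\<dots> = (\<lambda>j. \<Sum>i<K. x i * R i j)" by (rule sum_scl)
  finally have "\<forall>i<K. x i = 0" using z s0 by simp
  moreover obtain i where "i < K" "v = R i" using v t by auto
  ultimately show "u v = 0" using v by (auto simp: x_def)
qed

lemma d_in_span: "(\<lambda>l. \<Sum>i<K. x i * r i l) \<in> fv.span (r ` {..<K})"
proof -
  have "(\<Sum>i<K. scl (x i) (r i)) \<in> fv.span (r ` {..<K})"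
    by (intro fv.span_sum fv.span_scale fv.span_base) auto
  then show ?thesis by (simp add: sum_scl)
qed


lemma ext_lemma:
  fixes C1 :: "(nat \<Rightarrow> 'a::{field,finite}) set" and r :: "nat \<Rightarrow> nat \<Rightarrow> 'a"
  assumes C1N: "C1 \<subseteq> Fn N" and minC1: "minimal_code C1" and basis: "ext_basis C1 K r"
    and K2: "K \<ge> 2" and a_nz: "\<forall>j<n'. a j \<noteq> 0"
    and bnd: "\<And>c. c \<in> C1 - {0} \<Longrightarrow> m1 \<le> wt c \<and> wt c \<le> M1"
    and mC1: "minwt C1 = m1" and MC1: "maxwt C1 = M1" and m1: "m1 > 0"
    and C'_def: "C' = extension_code n' a r K"
  shows "C' \<subseteq> Fn (N + n') \<and> fv.subspace C' \<and> fv.dim C' = K \<and>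
         minwt C' = m1 \<and> maxwt C' = M1 + n' \<and> minimal_code C'"
proof -
  have injr: "inj_on r {..<K}" and indr: "fv.independent (r ` {..<K})"
    and spanr: "fv.span (r ` {..<K}) = C1" and wr0: "wt (r 0) = M1" and wr1: "wt (r 1) = m1"
    using basis mC1 MC1 by (auto simp: ext_basis_def)
  define R where "R i = (if i = 0 then cat n' a (r 0) else cat n' 0 (r i))" for i
  have C': "C' = row_code K R" unfolding C'_def extension_code_def R_def by (rule refl)
  define d where "d x = (\<lambda>l. \<Sum>i<K. x i * r i l)" for x
  define cw where "cw x = (\<lambda>j. \<Sum>i<K. x i * R i j)" for x
  have C'cw: "C' = range cw" by (auto simp: C' row_code_def cw_def)
  have dC1: "d x \<in> C1" for x using d_in_span[where x=x and K=K and r=r] spanr by (simp add: d_def)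
  have dFn: "d x \<in> Fn N" for x using dC1 C1N by auto
  have d0: "d x = 0 \<Longrightarrow> \<forall>i<K. x i = 0" for x
    using indep_coeffs[OF injr indr] by (auto simp: d_def)
  have K0: "0 < K" using K2 by simp
  have cw_eq: "cw x j = (if j < n' then x 0 * a j else d x (j - n'))" for x j
  proof (cases "j < n'")
    case True
    have "cw x j = (\<Sum>i<K. if i = 0 then x 0 * a j else 0)"
      unfolding cw_def using True by (intro sum.cong) (auto simp: R_def cat_def)
    also have "\<dots> = x 0 * a j" using K0 by (simp add: sum.delta)
    finally show ?thesis using True by simp
  next
    case False
    then show ?thesis unfolding cw_def d_def by (auto intro!: sum.cong simp: R_def cat_def)
  qed
  have suppd: "finite {l. d x l \<noteq> 0}" for x
  proof -
    have "{l. d x l \<noteq> 0} \<subseteq> {..<N}" using dFn[of x] by (auto simp: Fn_def) (meson not_le)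
    then show ?thesis by (rule finite_subset) simp
  qed
  have wt_cw: "wt (cw x) = (if x 0 \<noteq> 0 then n' else 0) + wt (d x)" for x
  proof -
    have "{j. cw x j \<noteq> 0} = {j. j < n' \<and> x 0 \<noteq> 0} \<union> (\<lambda>l. l + n') ` {l. d x l \<noteq> 0}"
    proof (rule set_eqI)
      fix j show "j \<in> {j. cw x j \<noteq> 0} \<longleftrightarrow> j \<in> {j. j < n' \<and> x 0 \<noteq> 0} \<union> (\<lambda>l. l + n') ` {l. d x l \<noteq> 0}"
      proof (cases "j < n'")
        case True then show ?thesis using a_nz by (auto simp: cw_eq)
      next
        case False
        then have "j = (j - n') + n'" by simp
        then show ?thesis using False by (auto simp: cw_eq image_iff)
      qed
    qed
    moreover have "card {j. j < n' \<and> x 0 \<noteq> 0} = (if x 0 \<noteq> 0 then n' else 0)" by simp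
    moreover have "card ((\<lambda>l. l + n') ` {l. d x l \<noteq> 0}) = wt (d x)"
      by (simp add: card_image wt_def)
    moreover have "{j. j < n' \<and> x 0 \<noteq> 0} \<inter> (\<lambda>l. l + n') ` {l. d x l \<noteq> 0} = {}" by auto
    ultimately show ?thesis unfolding wt_def
      by (simp add: card_Un_disjoint suppd)
  qed
  have d_shift: "d x l = cw x (l + n')" for x l by (simp add: cw_eq)
  have wt0: "wt (0 :: nat \<Rightarrow> 'a) = 0" by (simp add: wt_def)
  have cw_nz_d: "d x \<noteq> 0" if "cw x \<noteq> 0" for x
  proof
    assume "d x = 0"
    then have "\<forall>i<K. x i = 0" by (rule d0)
    then have "cw x = 0" by (auto simp: cw_def fun_eq_iff)
    then show False using that by simp
  qed
  have bndC': "m1 \<le> wt c \<and> wt c \<le> M1 + n'" if cC: "c \<in> C' - {0}" for c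
  proof -
    obtain x where c: "c = cw x" using cC C'cw by blast
    have "d x \<in> C1 - {0}" using cw_nz_d[of x] cC c dC1 by auto
    then have "m1 \<le> wt (d x) \<and> wt (d x) \<le> M1" by (rule bnd)
    then show ?thesis using c wt_cw[of x] by auto
  qed
  define ind where "ind i1 = (\<lambda>i::nat. if i = i1 then (1::'a) else 0)" for i1 :: nat
  have d_ind: "d (ind i1) = r i1" if "i1 < K" for i1
  proof (rule ext)
    fix l
    have "d (ind i1) l = (\<Sum>i<K. if i = i1 then r i l else 0)"
      unfolding d_def ind_def by (rule sum.cong) auto
    then show "d (ind i1) l = r i1 l" using that by (simp add: sum.delta)
  qed
  have w_ind0: "wt (cw (ind 0)) = n' + M1" using wt_cw[of "ind 0"] d_ind[OF K0] wr0 by (simp add: ind_def)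
  have w_ind1: "wt (cw (ind 1)) = m1" using wt_cw[of "ind 1"] d_ind[of 1] K2 wr1 by (simp add: ind_def)
  have r1C: "r 1 \<in> C1" using spanr K2 fv.span_base[of "r 1" "r ` {..<K}"] by auto
  have "r 1 \<noteq> 0" using wr1 m1 wt0 by auto
  then have "m1 \<le> M1" using bnd[of "r 1"] r1C by auto
  have in0: "cw (ind 0) \<in> C' - {0}"
  proof -
    have "cw (ind 0) \<noteq> 0" using w_ind0 m1 \<open>m1 \<le> M1\<close> wt0 by auto
    then show ?thesis using C'cw by blast
  qed
  have in1: "cw (ind 1) \<in> C' - {0}"
  proof -
    have "cw (ind 1) \<noteq> 0" using w_ind1 m1 wt0 by auto
    then show ?thesis using C'cw by blast
  qed
  have finW: "finite (wt ` (C' - {0}))"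
    by (rule finite_subset[of _ "{..M1 + n'}"]) (use bndC' in auto)
  have minC': "minwt C' = m1" unfolding minwt_def
    by (rule Min_eqI[OF finW]) (use bndC' in1 w_ind1 in \<open>auto intro!: image_eqI\<close>)
  have maxC': "maxwt C' = M1 + n'" unfolding maxwt_def
    by (rule Max_eqI[OF finW]) (use bndC' in0 w_ind0 in \<open>auto intro!: image_eqI\<close>)
  have C'Fn: "C' \<subseteq> Fn (N + n')"
  proof
    fix c assume "c \<in> C'"
    then obtain x where c: "c = cw x" using C'cw by blast
    show "c \<in> Fn (N + n')" unfolding Fn_def
    proof (intro CollectI allI impI)
      fix j assume j: "N + n' \<le> j"
      then have "d x (j - n') = 0" using dFn[of x] by (auto simp: Fn_def)
      then show "c j = 0" using j c by (simp add: cw_eq)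
    qed
  qed
  have Rsh: "R i (l + n') = r i l" for i l by (simp add: R_def cat_def)
  have injR: "inj_on R {..<K}"
  proof (rule inj_onI)
    fix i j assume "i \<in> {..<K}" "j \<in> {..<K}" "R i = R j"
    then have "r i = r j" using Rsh by (metis ext)
    then show "i = j" using injr \<open>i \<in> {..<K}\<close> \<open>j \<in> {..<K}\<close> by (auto dest: inj_onD)
  qed
  have indR: "fv.independent (R ` {..<K})"
  proof (rule indep_from_coeffs[OF injR])
    fix x assume "(\<lambda>j. \<Sum>i<K. x i * R i j) = 0"
    then have "cw x = 0" by (simp add: cw_def)
    then have "d x = 0" using d_shift by (auto simp: fun_eq_iff)
    then show "\<forall>i<K. x i = 0" by (rule d0)
  qed
  have spanC': "C' = fv.span (R ` {..<K})" using row_code_span[OF injR] C' by simp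
  have subC': "fv.subspace C'" using spanC' by simp
  have dimC': "fv.dim C' = K"
    using spanC' fv.dim_span_eq_card_independent[OF indR] card_image[OF injR] by simp
  have minimal: "minimal_code C'"
    unfolding minimal_code_def
  proof (intro ballI impI)
    fix c c' assume c: "c \<in> C' - {0}" and c': "c' \<in> C' - {0}" and ss: "{i. c' i \<noteq> 0} \<subseteq> {i. c i \<noteq> 0}"
    obtain x where cx: "c = cw x" using c C'cw by blast
    obtain x' where cx': "c' = cw x'" using c' C'cw by blast
    have dx: "d x \<in> C1 - {0}" using cw_nz_d[of x] c cx dC1 by auto
    have dx': "d x' \<in> C1 - {0}" using cw_nz_d[of x'] c' cx' dC1 by auto
    have "{l. d x' l \<noteq> 0} \<subseteq> {l. d x l \<noteq> 0}" using ss cx cx' d_shift by auto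
    then obtain t where t: "d x' = scl t (d x)" using minC1 dx dx' unfolding minimal_code_def by blast
    have "d (\<lambda>i. x' i - t * x i) = 0"
      using t by (simp add: d_def scl_def fun_eq_iff algebra_simps sum_subtractf sum_distrib_left)
    then have "\<forall>i<K. x' i = t * x i" using d0 by fastforce
    then have "cw x' = scl t (cw x)" by (simp add: cw_def scl_def fun_eq_iff sum_distrib_left algebra_simps)
    then show "\<exists>t. c' = scl t c" using cx cx' by blast
  qed
  show ?thesis using C'Fn subC' dimC' minC' maxC' minimal by simp
qed


lemma card_filter_bij:
  assumes b: "bij_betw f A B"
  shows "card {j \<in> A. Q (f j)} = card {p \<in> B. Q p}"
proof -
  have "f ` {j \<in> A. Q (f j)} = {p \<in> B. Q p}" using b by (auto simp: bij_betw_def)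
  moreover have "inj_on f {j \<in> A. Q (f j)}"
    by (rule inj_on_subset[OF bij_betw_imp_inj_on[OF b]]) auto
  ultimately show ?thesis by (metis card_image)
qed




theorem corollary3p1:
  fixes g :: "nat \<Rightarrow> nat \<Rightarrow> 'a::{field,finite}"
    and ps r :: "nat \<Rightarrow> nat \<Rightarrow> 'a"
    and a :: "nat \<Rightarrow> 'a"
    and n k h w K N n' :: nat
    and C1 C' :: "(nat \<Rightarrow> 'a) set"
  defines "q \<equiv> card (UNIV :: 'a set)"
  assumes n_pos: "n \<ge> 1"
    and gen: "is_gen_matrix n g k"
    and proj: "projective n g"
    and w_def: "w = maxwt (gen_code n g k)"
    and h_pos: "h > 0"
    and h_bound: "real h > log (real q) (real w) - real k + 2"
    and K_def: "K = k + h"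
    and simplex: "simplex_compl_cols n g K N ps"
    and C1_def: "C1 = gen_code N ps K"
    and n'_def: "n' = nat (\<lceil>real q * real (q ^ (K - 1) - w) / (real q - 1)\<rceil> - int (q ^ (K - 1)))"
    and basis: "ext_basis C1 K r"
    and a_nz: "\<forall>j<n'. a j \<noteq> 0"
    and C'_def: "C' = extension_code n' a r K"
  shows "N = (q ^ K - 1) div (q - 1) - n \<and> fv.dim C1 = K \<and>
         minwt C1 = q ^ (K - 1) - w \<and> maxwt C1 = q ^ (K - 1) \<and>
         n' \<ge> 1 \<and>
         C' \<subseteq> Fn (N + n') \<and> fv.subspace C' \<and> fv.dim C' = K \<and>
         minwt C' = q ^ (K - 1) - w \<and> maxwt C' = q ^ (K - 1) + n' \<and>
         minimal_code C' \<and>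
         \<not> (real (minwt C') / real (maxwt C') > (real q - 1) / real q)"
proof -
  have q2: "q \<ge> 2" unfolding q_def by (rule card_ge2)
  have gFn: "\<And>j. j < n \<Longrightarrow> g j \<in> Fn k" using gen by (simp add: is_gen_matrix_def)
  have gnz: "\<And>j. j < n \<Longrightarrow> g j \<noteq> 0" using proj by (simp add: projective_def)
  have ginj: "inj_on g {..<n}" using proj by (auto simp: projective_def inj_on_def)
  obtain P where PR: "proj_reps K P" and GP: "g ` {..<n} \<subseteq> P"
    and bij: "bij_betw ps {..<N} (P - g ` {..<n})"
    using simplex by (auto simp: simplex_compl_cols_def)
  have finFnK: "finite (Fn K :: (nat \<Rightarrow> 'a) set)" using card_Fn by blast
  have finP: "finite P" using PR finFnK by (auto simp: proj_reps_def intro: finite_subset)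
  have k1: "k \<ge> 1"
  proof (rule ccontr)
    assume "\<not> k \<ge> 1"
    then have "k = 0" by simp
    then have "g 0 = 0" using gFn[of 0] n_pos by (auto simp: Fn_def fun_eq_iff)
    then show False using gnz[of 0] n_pos by simp
  qed
  have K2: "K \<ge> 2" using k1 h_pos K_def by simp
  have cardG: "card (g ` {..<n}) = n" using card_image[OF ginj] by simp
  have N_eq: "N = card P - n"
  proof -
    have "N = card (P - g ` {..<n})" using bij_betw_same_card[OF bij] by simp
    also have "\<dots> = card P - n" using card_Diff_subset[OF _ GP] cardG finite_imageI by simp
    finally show ?thesis .
  qed
  have cardP: "card P = (q ^ K - 1) div (q - 1)"
  proof -
    have e: "card P * (q - 1) = q ^ K - 1" using card_P[OF PR] unfolding q_def .
    have "q - 1 \<noteq> 0" using q2 by simp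
    then have "card P * (q - 1) div (q - 1) = card P" by simp
    then show ?thesis using e by metis
  qed
  have part1: "N = (q ^ K - 1) div (q - 1) - n" using N_eq cardP by simp
  define encC where "encC x' = (\<lambda>j. if j < n then \<Sum>i<k. x' i * g j i else (0::'a))" for x'
  define C where "C = gen_code n g k"
  have Cenc: "C = encC ` Fn k" by (auto simp: C_def gen_code_def encC_def)
  have wt0: "wt (0 :: nat \<Rightarrow> 'a) = 0" by (simp add: wt_def)
  have finC: "finite C" using Cenc card_Fn[where K=k and 'a='a] by simp
  obtain i0 where gi0: "g 0 i0 \<noteq> 0" using gnz[of 0] n_pos by (auto simp: fun_eq_iff)
  have i0k: "i0 < k" using gi0 gFn[of 0] n_pos by (auto simp: Fn_def) (meson not_le)
  define e0 where "e0 = (\<lambda>i::nat. if i = i0 then (1::'a) else 0)"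
  have e0Fn: "e0 \<in> Fn k" using i0k by (auto simp: e0_def Fn_def)
  have "encC e0 0 = (\<Sum>i<k. (if i = i0 then 1 else 0) * g 0 i)"
    using n_pos by (simp add: encC_def e0_def)
  also have "\<dots> = (\<Sum>i<k. if i = i0 then g 0 i else 0)" by (rule sum.cong) auto
  also have "\<dots> = g 0 i0" using i0k by (simp add: sum.delta)
  finally have "encC e0 \<noteq> 0" using gi0 by (metis zero_fun_def)
  then have Cnz: "C - {0} \<noteq> {}" using e0Fn Cenc by auto
  have finWC: "finite (wt ` (C - {0}))" using finC by simp
  have w_max: "w = Max (wt ` (C - {0}))" using w_def C_def by (simp add: maxwt_def)
  have wC: "\<And>c. c \<in> C \<Longrightarrow> wt c \<le> w"
  proof -
    fix c assume "c \<in> C"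
    show "wt c \<le> w"
    proof (cases "c = 0")
      case True then show ?thesis using wt0 by simp
    next
      case False then show ?thesis using \<open>c \<in> C\<close> finWC w_max by (auto intro: Max_ge)
    qed
  qed
  have "w \<in> wt ` (C - {0})" using Max_in[OF finWC] Cnz w_max by simp
  then obtain cw where cwC: "cw \<in> C - {0}" and wtcw: "wt cw = w" by force
  have w_lt: "w < q ^ (K - 2)"
  proof (rule ccontr)
    assume "\<not> w < q ^ (K - 2)"
    then have ge: "q ^ (K - 2) \<le> w" by simp
    have q1: "(1::real) < real q" using q2 by simp
    have "real (K - 2) \<le> log (real q) (real w)"
      using le_log_of_power[of "real q" "K - 2" "real w"] ge q1
      by (metis of_nat_le_iff of_nat_power)
    moreover have "real (K - 2) = real h + real k - 2" using K2 K_def by simp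
    ultimately show False using h_bound by simp
  qed
  define enc1 where "enc1 x = (\<lambda>j. if j < N then \<Sum>i<K. x i * ps j i else (0::'a))" for x
  have C1enc: "C1 = enc1 ` Fn K" by (auto simp: C1_def gen_code_def enc1_def)
  define restr where "restr x = (\<lambda>i. if i < k then x i else (0::'a))" for x :: "nat \<Rightarrow> 'a"
  have restrFn: "restr x \<in> Fn k" for x by (simp add: restr_def Fn_def)
  have ipg: "ip K x (g j) = (\<Sum>i<k. restr x i * g j i)" if j: "j < n" for x j
  proof -
    have "ip K x (g j) = (\<Sum>i<k. x i * g j i)"
      unfolding ip_def
      by (rule sum.mono_neutral_right) (use gFn[OF j] K_def in \<open>auto simp: Fn_def\<close>)
    also have "\<dots> = (\<Sum>i<k. restr x i * g j i)" by (rule sum.cong) (auto simp: restr_def)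
    finally show ?thesis .
  qed
  let ?G = "g ` {..<n}"
  have wform: "wt (enc1 x) + wt (encC (restr x)) = card {p \<in> P. ip K x p \<noteq> 0}" for x
  proof -
    have "{j. enc1 x j \<noteq> 0} = {j \<in> {..<N}. ip K x (ps j) \<noteq> 0}" by (auto simp: enc1_def ip_def)
    then have a1: "wt (enc1 x) = card {p \<in> P - ?G. ip K x p \<noteq> 0}"
      unfolding wt_def using card_filter_bij[OF bij, of "\<lambda>p. ip K x p \<noteq> 0"] by simp
    have "{j. encC (restr x) j \<noteq> 0} = {j \<in> {..<n}. ip K x (g j) \<noteq> 0}" by (auto simp: encC_def ipg)
    then have a2: "wt (encC (restr x)) = card {p \<in> ?G. ip K x p \<noteq> 0}"
      unfolding wt_def using card_filter_bij[OF inj_on_imp_bij_betw[OF ginj], of "\<lambda>p. ip K x p \<noteq> 0"] by simp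
    have "{p \<in> P. ip K x p \<noteq> 0} = {p \<in> P - ?G. ip K x p \<noteq> 0} \<union> {p \<in> ?G. ip K x p \<noteq> 0}" using GP by auto
    then have "card {p \<in> P. ip K x p \<noteq> 0} = card {p \<in> P - ?G. ip K x p \<noteq> 0} + card {p \<in> ?G. ip K x p \<noteq> 0}"
      by (simp only:) (rule card_Un_disjoint, use finP in auto)
    then show ?thesis using a1 a2 by simp
  qed
  have encC0: "encC 0 = 0" by (simp add: encC_def fun_eq_iff)
  have enc10: "enc1 0 = 0" by (simp add: enc1_def fun_eq_iff)
  have wt1: "wt (enc1 x) = q ^ (K - 1) - wt (encC (restr x)) \<and> wt (encC (restr x)) \<le> w"
    if x: "x \<in> Fn K" "x \<noteq> 0" for x
  proof -
    have "card {p \<in> P. ip K x p \<noteq> 0} = q ^ (K - 1)" using card_P_nz[OF PR x] unfolding q_def .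
    moreover have "encC (restr x) \<in> C" using Cenc restrFn by blast
    ultimately show ?thesis using wform[of x] wC by simp
  qed
  obtain K0 where K0: "K = Suc (Suc K0)" using K2 by (metis add_2_eq_Suc le_Suc_ex)
  have qK: "q ^ (K - 1) = q * q ^ (K - 2)" using K0 by simp
  have "q ^ (K - 2) \<le> q ^ (K - 1)" by (rule power_increasing) (use K2 q2 in auto)
  then have w_lt1: "w < q ^ (K - 1)" using w_lt by linarith
  have bndC1: "q ^ (K - 1) - w \<le> wt c \<and> wt c \<le> q ^ (K - 1)" if c: "c \<in> C1 - {0}" for c
  proof -
    obtain x where x: "x \<in> Fn K" "c = enc1 x" using c C1enc by blast
    have "x \<noteq> 0" using x c enc10 by auto
    then show ?thesis using wt1[OF x(1)] x by auto
  qed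
  define xM where "xM = (\<lambda>i::nat. if i = k then (1::'a) else 0)"
  have xM: "xM \<in> Fn K" "xM \<noteq> 0" using K_def h_pos by (auto simp: xM_def Fn_def fun_eq_iff)
  have "restr xM = 0" by (simp add: restr_def xM_def fun_eq_iff)
  then have wM: "wt (enc1 xM) = q ^ (K - 1)" using wt1[OF xM] encC0 wt0 by simp
  have qpos: "q ^ (K - 1) > 0" using q2 by simp
  have inM: "enc1 xM \<in> C1 - {0}" using wM qpos wt0 C1enc xM(1) by auto
  obtain x' where x': "x' \<in> Fn k" "cw = encC x'" using cwC Cenc by blast
  have x'K: "x' \<in> Fn K" using x'(1) K_def by (auto simp: Fn_def)
  have "x' \<noteq> 0" using x' cwC encC0 by auto
  moreover have "restr x' = x'" using x'(1) by (auto simp: restr_def Fn_def fun_eq_iff)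
  ultimately have wm: "wt (enc1 x') = q ^ (K - 1) - w" using wt1[OF x'K] x' wtcw by simp
  have inm: "enc1 x' \<in> C1 - {0}" using wm w_lt1 wt0 C1enc x'K by auto
  have finW1: "finite (wt ` (C1 - {0}))"
    by (rule finite_subset[of _ "{..q ^ (K - 1)}"]) (use bndC1 in auto)
  have minC1: "minwt C1 = q ^ (K - 1) - w" unfolding minwt_def
    by (rule Min_eqI[OF finW1]) (use bndC1 inm wm in \<open>auto intro!: image_eqI\<close>)
  have maxC1: "maxwt C1 = q ^ (K - 1)" unfolding maxwt_def
    by (rule Max_eqI[OF finW1]) (use bndC1 inM wM in \<open>auto intro!: image_eqI\<close>)
  have spanC1: "fv.span (r ` {..<K}) = C1" and injr: "inj_on r {..<K}" and indr: "fv.independent (r ` {..<K})"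
    using basis by (auto simp: ext_basis_def)
  have C1N: "C1 \<subseteq> Fn N" by (auto simp: C1_def gen_code_def Fn_def)
  have subC1: "fv.subspace C1" using spanC1 fv.subspace_span by metis
  have finsupp: "finite {i. c i \<noteq> 0}" if "c \<in> C1" for c
  proof -
    have cN: "c \<in> Fn N" using that C1N by auto
    have "{i. c i \<noteq> 0} \<subseteq> {..<N}"
    proof
      fix i assume "i \<in> {i. c i \<noteq> 0}"
      then have "\<not> N \<le> i" using cN unfolding Fn_def by auto
      then show "i \<in> {..<N}" by simp
    qed
    then show ?thesis by (rule finite_subset) simp
  qed
  define A where "A = q ^ (K - 2)"
  have qA: "q * A = (q - 1) * A + A" using q2 by (cases q) auto
  have "(q - 1) * A < q * A - w" using qA w_lt A_def by linarith
  then have "q * ((q - 1) * A) < q * (q * A - w)" using q2 by simp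
  then have ab: "(q - 1) * q ^ (K - 1) < q * (q ^ (K - 1) - w)" using qK A_def by (simp add: mult.left_commute)
  have minC1': "minimal_code C1"
    by (rule AB_minimal[OF subC1 finsupp bndC1]) (use ab in \<open>simp_all add: q_def\<close>)
  have dimC1: "fv.dim C1 = K"
    using spanC1 fv.dim_span_eq_card_independent[OF indr] card_image[OF injr] by simp
  have m1: "q ^ (K - 1) - w > 0" using w_lt1 by simp
  have ext: "C' \<subseteq> Fn (N + n') \<and> fv.subspace C' \<and> fv.dim C' = K \<and>
         minwt C' = q ^ (K - 1) - w \<and> maxwt C' = q ^ (K - 1) + n' \<and> minimal_code C'"
    by (rule ext_lemma[OF C1N minC1' basis K2 a_nz bndC1 minC1 maxC1 m1 C'_def])
  define m where "m = q ^ (K - 1) - w"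
  define X where "X = real q * real m / (real q - 1)"
  have "real ((q - 1) * q ^ (K - 1)) < real (q * m)" using ab m_def by (simp only: of_nat_less_iff)
  then have "(real q - 1) * real (q ^ (K - 1)) < real q * real m" using q2 by (simp add: of_nat_diff)
  then have X_gt: "real (q ^ (K - 1)) < X" unfolding X_def using q2 by (simp add: pos_less_divide_eq mult.commute)
  have cX: "of_int \<lceil>X\<rceil> \<ge> X" by (rule le_of_int_ceiling)
  have gt: "\<lceil>X\<rceil> > int (q ^ (K - 1))" using X_gt cX by linarith
  have n'X: "n' = nat (\<lceil>X\<rceil> - int (q ^ (K - 1)))" using n'_def unfolding X_def m_def by simp
  have n'1: "n' \<ge> 1" using gt n'X by arith
  have n'eq: "int (q ^ (K - 1) + n') = \<lceil>X\<rceil>" using gt n'X by arith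
  have "\<not> (real (minwt C') / real (maxwt C') > (real q - 1) / real q)"
  proof -
    have M: "real (maxwt C') = of_int \<lceil>X\<rceil>" using ext n'eq by (metis of_int_of_nat_eq)
    have mC: "real (minwt C') = real m" using ext m_def by simp
    have "0 \<le> real (q ^ (K - 1))" by (rule of_nat_0_le_iff)
    then have "X > 0" using X_gt by linarith
    then have Mpos: "real (maxwt C') > 0" using M cX by linarith
    have "real q * real m \<le> (real q - 1) * real (maxwt C')"
    proof -
      have q1: "real q - 1 > 0" using q2 by simp
      have "X * (real q - 1) = real q * real m" unfolding X_def using q1 by simp
      moreover have "X * (real q - 1) \<le> of_int \<lceil>X\<rceil> * (real q - 1)"
        by (rule mult_right_mono[OF cX]) (use q1 in simp)
      ultimately show ?thesis using M by (simp add: mult.commute)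
    qed
    then show ?thesis using Mpos q2 mC by (simp add: divide_simps mult.commute)
  qed
  then show ?thesis using part1 dimC1 minC1 maxC1 n'1 ext by simp
qed


end
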